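(* Consider a multi-task model with $M$ tasks. Let $\Phi(W;x)\in\mathbb{R}^p$ be a shared representation of input $x$, differentiable in the shared parameters $W\in\mathbb{R}^d$, with Jacobian $\nabla_W\Phi(W;x)\in\mathbb{R}^{p\times d}$; let $\phi=(\phi_1,\dots,\phi_M)$ be task-specific parameters, and for each $m$ let $f_m(\Phi,\phi_m;y)$ be a loss differentiable in $\Phi$. Let $\mathcal{D}$ be a distribution over pairs $(x,y)$ for which $\mathbb{E}_{(x,y)\sim\mathcal{D}}[\nabla_W\Phi(W;x)]$ exists, and let $\mathcal{B}$ be a finite batch of pairs $(x,y)$. Define, for each $m$, \[ g^W_m=\frac{1}{|\mathcal{B}|}\sum_{(x,y)\in\mathcal{B}}\nabla_W\Phi(W;x)^\top\nabla_\Phi f_m(\Phi(W;x),\phi_m;y)\in\mathbb{R}^d, \qquad g^\Phi_m=\frac{1}{|\mathcal{B}|}\sum_{(x,y)\in\mathcal{B}}\nabla_\Phi f_m(\Phi(W;x),\phi_m;y)\in\mathbb{R}^p, \] (the parameter gradient and the representation gradient of the batch loss of task $m$), and let $\nabla_W F\in\mathbb{R}^{d\times M}$ and $\nabla_\Phi F\in\mathbb{R}^{p\times M}$ be the matrices with columns $g^W_m$ and $g^\Phi_m$ respectively. For $\lambda\in\Delta^M$ define the residual \[ R_{\mathcal{B}}=\sum_{m=1}^M\sum_{(x,y)\in\mathcal{B}}\frac{\lambda_m}{|\mathcal{B}|}\Big(\nabla_W\Phi(W;x)-\mathbb{E}_{(x',y')\sim\mathcal{D}}[\nabla_W\Phi(W;x')]\Big)^\top\nabla_\Phi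 f_m(\Phi(W;x),\phi_m;y). \] Suppose there exist $\lambda\in\Delta^M$ and $\ell,\epsilon,\delta>0$ such that \[ \big\|\mathbb{E}_{(x,y)\sim\mathcal{D}}[\nabla_W\Phi(W;x)]\big\|_2\le\ell,\qquad \|\nabla_\Phi F\,\lambda\|\le\epsilon,\qquad \|R_{\mathcal{B}}\|\le\delta . \] Then $\|\nabla_W F\,\lambda\|\le \ell\epsilon+\delta$.
   Context: $\Delta^M=\{\lambda\in\mathbb{R}^M:\lambda_i\ge0,\ \sum_i\lambda_i=1\}$ is the probability simplex. $\|\cdot\|$ is the Euclidean norm of a vector and $\|\cdot\|_2$ the spectral norm of a matrix. $\nabla_\Phi f_m(\Phi,\phi_m;y)$ is the gradient of $f_m$ with respect to its first argument. *)

theory Defs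
  imports "HOL-Analysis.Analysis" "HOL-Probability.Probability"
begin

definition grad :: "(real ^ 'p \<Rightarrow> real) \<Rightarrow> real ^ 'p \<Rightarrow> real ^ 'p" where
  "grad g z = (\<chi> i. frechet_derivative g (at z) (axis i 1))"

definition spec_norm :: "real ^ 'n ^ 'm \<Rightarrow> real" where
  "spec_norm A = onorm (\<lambda>v. A *v v)"

end

theory Submission
  imports Defs
begin

lemma sl_scale: "c *\<^sub>R sum_list (map f xs) = sum_list (map (\<lambda>x. c *\<^sub>R (f x :: 'a::real_vector)) xs)"
  by (induction xs) (auto simp: scaleR_add_right)

lemma sl_mv: "(A::real^'n^'k) *v sum_list (map f xs) = sum_list (map (\<lambda>x. A *v f x) xs)"
  by (induction xs) (auto simp: matrix_vector_right_distrib)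

lemma s_mv: "(A::real^'n^'k) *v sum f S = sum (\<lambda>x. A *v f x) S"
  using linear_sum[OF matrix_vector_mul_linear, of A f S] by (simp add: o_def)

lemma transpose_diff: "transpose ((A::real^'n^'k) - B) = transpose A - transpose B"
  by (simp add: transpose_def vec_eq_iff)

lemma transp_bound:
  fixes E :: "real^'n^'k"
  shows "norm (transpose E *v v) \<le> spec_norm E * norm v"
proof -
  let ?u = "transpose E *v v"
  have "norm ?u ^ 2 = ?u \<bullet> ?u" by (simp add: power2_norm_eq_inner)
  also have "\<dots> = v \<bullet> (E *v ?u)"
    by (simp add: transpose_matrix_vector dot_lmul_matrix)
  also have "\<dots> \<le> norm v * norm (E *v ?u)" by (rule norm_cauchy_schwarz)
  also have "\<dots> \<le> norm v * (spec_norm E * norm ?u)"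
    unfolding spec_norm_def
    by (intro mult_left_mono onorm matrix_vector_mul_bounded_linear) auto
  finally have h: "norm ?u * norm ?u \<le> (spec_norm E * norm v) * norm ?u"
    by (simp add: power2_eq_square algebra_simps)
  show ?thesis
  proof (cases "norm ?u = 0")
    case True
    have "0 \<le> spec_norm E" unfolding spec_norm_def
      by (intro onorm_pos_le matrix_vector_mul_bounded_linear)
    then show ?thesis using True by simp
  next
    case False
    then show ?thesis using h by (simp add: mult_le_cancel_right)
  qed
qed

theorem theorem1:
  fixes Phi :: "real ^ 'd \<Rightarrow> 'x \<Rightarrow> real ^ 'p"
    and f :: "'m::finite \<Rightarrow> real ^ 'p \<Rightarrow> 'q \<Rightarrow> 'y \<Rightarrow> real"
    and phi :: "'m \<Rightarrow> 'q"
    and W :: "real ^ 'd"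
    and D :: "('x \<times> 'y) measure"
    and B :: "('x \<times> 'y) list"
    and lam :: "'m \<Rightarrow> real"
    and l eps del :: real
  assumes diffPhi: "\<And>x. (\<lambda>w. Phi w x) differentiable (at W)"
    and difff: "\<And>m z q y. (\<lambda>v. f m v q y) differentiable (at z)"
    and probD: "prob_space D"
    and intJ: "integrable D (\<lambda>xy. jacobian (\<lambda>w. Phi w (fst xy)) (at W))"
    and lam_nonneg: "\<And>m. lam m \<ge> 0"
    and lam_sum: "(\<Sum>m\<in>UNIV. lam m) = 1"
    and l_pos: "l > 0" and eps_pos: "eps > 0" and del_pos: "del > 0"
    and hl: "spec_norm (integral\<^sup>L D (\<lambda>xy. jacobian (\<lambda>w. Phi w (fst xy)) (at W))) \<le> l"
    and heps: "norm (\<Sum>m\<in>UNIV. lam m *\<^sub>R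
                 ((1 / real (length B)) *\<^sub>R
                   (\<Sum>xy\<leftarrow>B. grad (\<lambda>v. f m v (phi m) (snd xy)) (Phi W (fst xy))))) \<le> eps"
    and hdel: "norm (\<Sum>m\<in>UNIV. \<Sum>xy\<leftarrow>B. (lam m / real (length B)) *\<^sub>R
                 (transpose (jacobian (\<lambda>w. Phi w (fst xy)) (at W)
                     - integral\<^sup>L D (\<lambda>xy'. jacobian (\<lambda>w. Phi w (fst xy')) (at W)))
                  *v grad (\<lambda>v. f m v (phi m) (snd xy)) (Phi W (fst xy)))) \<le> del"
  shows "norm (\<Sum>m\<in>UNIV. lam m *\<^sub>R
                 ((1 / real (length B)) *\<^sub>R
                   (\<Sum>xy\<leftarrow>B. transpose (jacobian (\<lambda>w. Phi w (fst xy)) (at W))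
                       *v grad (\<lambda>v. f m v (phi m) (snd xy)) (Phi W (fst xy)))))
         \<le> l * eps + del"
proof -
  define E where "E = integral\<^sup>L D (\<lambda>xy'. jacobian (\<lambda>w. Phi w (fst xy')) (at W))"
  define J where "J = (\<lambda>xy::'x \<times> 'y. jacobian (\<lambda>w. Phi w (fst xy)) (at W))"
  define g where "g = (\<lambda>m xy. grad (\<lambda>v. f m v (phi m) (snd xy)) (Phi W (fst xy)))"
  define n where "n = real (length B)"
  define G where "G = (\<Sum>m\<in>UNIV. lam m *\<^sub>R ((1 / n) *\<^sub>R (\<Sum>xy\<leftarrow>B. g m xy)))"
  define R where "R = (\<Sum>m\<in>UNIV. \<Sum>xy\<leftarrow>B. (lam m / n) *\<^sub>R (transpose (J xy - E) *v g m xy))"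
  define T where "T = (\<Sum>m\<in>UNIV. lam m *\<^sub>R ((1 / n) *\<^sub>R (\<Sum>xy\<leftarrow>B. transpose (J xy) *v g m xy)))"
  have hE: "spec_norm E \<le> l" using hl unfolding E_def by simp
  have hG: "norm G \<le> eps" using heps unfolding G_def g_def n_def by simp
  have hR: "norm R \<le> del" using hdel unfolding R_def E_def J_def g_def n_def by simp
  have eqT: "T = R + transpose E *v G"
  proof -
    have "transpose E *v G = (\<Sum>m\<in>UNIV. \<Sum>xy\<leftarrow>B. (lam m / n) *\<^sub>R (transpose E *v g m xy))"
      unfolding G_def
      by (simp add: s_mv sl_scale sl_mv matrix_vector_mult_scaleR
                    scaleR_scaleR)
    moreover have "T = (\<Sum>m\<in>UNIV. \<Sum>xy\<leftarrow>B. (lam m / n) *\<^sub>R (transpose (J xy) *v g m xy))"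
      unfolding T_def by (simp add: sl_scale scaleR_scaleR)
    moreover have "R = (\<Sum>m\<in>UNIV. \<Sum>xy\<leftarrow>B. (lam m / n) *\<^sub>R (transpose (J xy) *v g m xy)
                      - (lam m / n) *\<^sub>R (transpose E *v g m xy))"
      unfolding R_def by (simp add: transpose_diff matrix_vector_mult_diff_rdistrib scaleR_diff_right)
    ultimately show ?thesis
      by (simp add: sum_list_subtractf sum_subtractf)
  qed
  have "norm T \<le> norm R + norm (transpose E *v G)" using eqT norm_triangle_ineq by simp
  also have "norm (transpose E *v G) \<le> spec_norm E * norm G" by (rule transp_bound)
  also have "\<dots> \<le> l * eps"
    using hE hG l_pos by (intro mult_mono) (auto simp: spec_norm_def intro!: onorm_pos_le matrix_vector_mul_bounded_linear)
  finally have "norm T \<le> l * eps + del" using hR by simp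
  then show ?thesis unfolding T_def J_def g_def n_def by simp
qed

end
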